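(* For any $\varepsilon>0$ there exists a two-player extensive-form game $\Gamma$ such that $\Gamma$ has, up to realization equivalence, a unique CDT equilibrium, and such that for every CDT equilibrium $\pi$ of $\Gamma$, every CDT equilibrium $\pi'$ of $\mathrm{pr}_1(\Gamma)$, and both players $i\in\{1,2\}$, $U_i(\pi')/U_i(\pi)\le\varepsilon$. In particular, $\mathrm{VoR}^{\mathrm{SC}}(\Gamma)=0$ for every $\mathrm{SC}\in\{\mathrm{wCDT},\mathrm{bCDT},\mathrm{wEDT},\mathrm{bEDT},\mathrm{wNash},\mathrm{bNash}\}$.
   Context: An extensive-form game consists of a finite rooted tree (nodes $\mathcal H$, leaves $\mathcal Z$, actions $A_h$), players $\mathcal N$ plus chance, an assignment of nonterminal nodes to players or chance, chance distributions, utilities $u_i:\mathcal Z\to\mathbb R_{\ge0}$, and for each $i$ a partition $\mathcal I_i$ of its nodes into infosets with common action sets $A_I$. For a node $h$, $\mathrm{obs}_1(h)$ is the sequence of (infoset, action) pairs at Player 1's nodes on the root-to-$h$ path (excluding $h$). $\mathrm{pr}_1(\Gamma)$ has the same tree and utilities as $\Gamma$, with each $I\in\mathcal I_1$ partitioned into the classes of $h\sim h'\iff\mathrm{obs}_1(h)=\mathrm{obs}_1(h')$ (computed in $\Gamma$) and other players' infosets unchanged. A behavioral strategy $\pi_i$ assigns $\pi_i(\cdot\mid I)\in\Delta(A_I)$ to each $I\in\mathcal I_i$; $S_i$ is the set of these; $U_i(\pi)=\sum_z\mathbb P(z\mid\pi)u_i(z)$ with $\mathbb P(z\mid\pi)$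 the reach probability of $z$. Profiles are realization-equivalent if they induce the same reach probabilities at all nodes. $\pi_i^{I\mapsto\sigma}$ plays $\sigma$ at $I$ and as $\pi_i$ elsewhere. Nash equilibrium: each $\pi_i\in\arg\max_{\pi_i'}U_i(\pi_i',\pi_{-i})$. EDT equilibrium: for all $i$, $I\in\mathcal I_i$, $\pi_i(\cdot\mid I)\in\arg\max_{\sigma\in\Delta(A_I)}U_i(\pi_i^{I\mapsto\sigma},\pi_{-i})$. CDT equilibrium: each $\pi_i$ is a Karush–Kuhn–Tucker point of maximizing $U_i(\cdot,\pi_{-i})$ over $S_i=\prod_I\Delta(A_I)$. For X in {Nash, EDT, CDT}, $u_1(\mathrm{bX}(\Gamma))$ / $u_1(\mathrm{wX}(\Gamma))$ is the max / min of $U_1$ over X equilibria of $\Gamma$; $\mathrm{VoR}^{\mathrm{SC}}(\Gamma)=u_1(\mathrm{SC}(\mathrm{pr}_1(\Gamma)))/u_1(\mathrm{SC}(\Gamma))$. *)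

theory Defs
  imports "HOL-Analysis.Analysis"
begin

text \<open>Nodes are action histories (lists of actions, the root is the empty list).
Player 0 denotes chance; the players are 1, ..., num_players.
Infosets of player i are given as sets of nodes.\<close>

record 'a efg =
  nodes :: "'a list set"
  num_players :: nat
  turn :: "'a list \<Rightarrow> nat"
  chance :: "'a list \<Rightarrow> 'a \<Rightarrow> real"
  util :: "nat \<Rightarrow> 'a list \<Rightarrow> real"
  infosets :: "nat \<Rightarrow> 'a list set set"

definition players :: "'a efg \<Rightarrow> nat set" where
  "players G = {1..num_players G}"

definition acts :: "'a efg \<Rightarrow> 'a list \<Rightarrow> 'a set" where
  "acts G h = {a. h @ [a] \<in> nodes G}"

definition leaves :: "'a efg \<Rightarrow> 'a list set" where
  "leaves G = {h \<in> nodes G. acts G h = {}}"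

definition internal_nodes :: "'a efg \<Rightarrow> 'a list set" where
  "internal_nodes G = {h \<in> nodes G. acts G h \<noteq> {}}"

definition is_dist :: "'a set \<Rightarrow> ('a \<Rightarrow> real) \<Rightarrow> bool" where
  "is_dist A p \<longleftrightarrow> (\<forall>a. p a \<ge> 0) \<and> (\<forall>a. a \<notin> A \<longrightarrow> p a = 0) \<and> sum p A = 1"

definition actsI :: "'a efg \<Rightarrow> 'a list set \<Rightarrow> 'a set" where
  "actsI G I = acts G (SOME h. h \<in> I)"

definition wf_efg :: "'a efg \<Rightarrow> bool" where
  "wf_efg G \<longleftrightarrow>
     finite (nodes G) \<and> [] \<in> nodes G \<and>
     (\<forall>h a. h @ [a] \<in> nodes G \<longrightarrow> h \<in> nodes G) \<and>
     (\<forall>h \<in> internal_nodes G. turn G h = 0 \<or> turn G h \<in> players G) \<and>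
     (\<forall>h \<in> internal_nodes G. turn G h = 0 \<longrightarrow> is_dist (acts G h) (chance G h)) \<and>
     (\<forall>i \<in> players G. \<forall>z \<in> leaves G. util G i z \<ge> 0) \<and>
     (\<forall>i \<in> players G.
        (\<forall>I \<in> infosets G i. I \<noteq> {}) \<and>
        (\<forall>I \<in> infosets G i. \<forall>J \<in> infosets G i. I \<noteq> J \<longrightarrow> I \<inter> J = {}) \<and>
        \<Union>(infosets G i) = {h \<in> internal_nodes G. turn G h = i} \<and>
        (\<forall>I \<in> infosets G i. \<forall>h \<in> I. \<forall>h' \<in> I. acts G h = acts G h'))"

definition infoset_of :: "'a efg \<Rightarrow> nat \<Rightarrow> 'a list \<Rightarrow> 'a list set" where
  "infoset_of G i h = (THE I. I \<in> infosets G i \<and> h \<in> I)"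

type_synonym 'a bstrat = "'a list set \<Rightarrow> 'a \<Rightarrow> real"
type_synonym 'a profile = "nat \<Rightarrow> 'a bstrat"

definition strat :: "'a efg \<Rightarrow> nat \<Rightarrow> 'a bstrat \<Rightarrow> bool" where
  "strat G i s \<longleftrightarrow> (\<forall>I \<in> infosets G i. is_dist (actsI G I) (s I))"

definition profile :: "'a efg \<Rightarrow> 'a profile \<Rightarrow> bool" where
  "profile G \<pi> \<longleftrightarrow> (\<forall>i \<in> players G. strat G i (\<pi> i))"

definition step_prob :: "'a efg \<Rightarrow> 'a profile \<Rightarrow> 'a list \<Rightarrow> 'a \<Rightarrow> real" where
  "step_prob G \<pi> g a =
     (if turn G g = 0 then chance G g a
      else \<pi> (turn G g) (infoset_of G (turn G g) g) a)"

definition reach :: "'a efg \<Rightarrow> 'a profile \<Rightarrow> 'a list \<Rightarrow> real" where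
  "reach G \<pi> h = (\<Prod>k<length h. step_prob G \<pi> (take k h) (h ! k))"

definition U :: "'a efg \<Rightarrow> nat \<Rightarrow> 'a profile \<Rightarrow> real" where
  "U G i \<pi> = (\<Sum>z \<in> leaves G. reach G \<pi> z * util G i z)"

definition real_equiv :: "'a efg \<Rightarrow> 'a profile \<Rightarrow> 'a profile \<Rightarrow> bool" where
  "real_equiv G \<pi> \<pi>' \<longleftrightarrow> (\<forall>h \<in> nodes G. reach G \<pi> h = reach G \<pi>' h)"

definition nash_eq :: "'a efg \<Rightarrow> 'a profile \<Rightarrow> bool" where
  "nash_eq G \<pi> \<longleftrightarrow> profile G \<pi> \<and>
     (\<forall>i \<in> players G. \<forall>s. strat G i s \<longrightarrow> U G i (\<pi>(i := s)) \<le> U G i \<pi>)"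

definition edt_eq :: "'a efg \<Rightarrow> 'a profile \<Rightarrow> bool" where
  "edt_eq G \<pi> \<longleftrightarrow> profile G \<pi> \<and>
     (\<forall>i \<in> players G. \<forall>I \<in> infosets G i. \<forall>d. is_dist (actsI G I) d \<longrightarrow>
        U G i (\<pi>(i := (\<pi> i)(I := d))) \<le> U G i \<pi>)"

definition dU :: "'a efg \<Rightarrow> nat \<Rightarrow> 'a profile \<Rightarrow> 'a list set \<Rightarrow> 'a \<Rightarrow> real" where
  "dU G i \<pi> I a = deriv (\<lambda>t. U G i (\<pi>(i := (\<pi> i)(I := (\<pi> i I)(a := t))))) (\<pi> i I a)"

text \<open>KKT point of maximizing U_i(., pi_{-i}) over the product of simplices:
constraints -x_{I,a} <= 0 (multipliers mu) and sum_a x_{I,a} - 1 = 0 (multiplier lambda).\<close>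
definition kkt_point :: "'a efg \<Rightarrow> nat \<Rightarrow> 'a profile \<Rightarrow> bool" where
  "kkt_point G i \<pi> \<longleftrightarrow> strat G i (\<pi> i) \<and>
     (\<forall>I \<in> infosets G i. \<exists>lam::real. \<exists>\<mu>::'a \<Rightarrow> real. \<forall>a \<in> actsI G I.
        \<mu> a \<ge> 0 \<and> \<mu> a * \<pi> i I a = 0 \<and> dU G i \<pi> I a = lam - \<mu> a)"

definition cdt_eq :: "'a efg \<Rightarrow> 'a profile \<Rightarrow> bool" where
  "cdt_eq G \<pi> \<longleftrightarrow> profile G \<pi> \<and> (\<forall>i \<in> players G. kkt_point G i \<pi>)"

definition obs1 :: "'a efg \<Rightarrow> 'a list \<Rightarrow> ('a list set \<times> 'a) list" where
  "obs1 G h = map (\<lambda>k. (infoset_of G 1 (take k h), h ! k))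
                  (filter (\<lambda>k. turn G (take k h) = 1) [0..<length h])"

definition pr1 :: "'a efg \<Rightarrow> 'a efg" where
  "pr1 G = G\<lparr> infosets := (infosets G)(1 :=
      (\<Union>I \<in> infosets G 1. {{h' \<in> I. obs1 G h' = obs1 G h} | h. h \<in> I})) \<rparr>"

definition best_val :: "('a efg \<Rightarrow> 'a profile \<Rightarrow> bool) \<Rightarrow> 'a efg \<Rightarrow> real" where
  "best_val X G = Sup {U G 1 \<pi> | \<pi>. X G \<pi>}"

definition worst_val :: "('a efg \<Rightarrow> 'a profile \<Rightarrow> bool) \<Rightarrow> 'a efg \<Rightarrow> real" where
  "worst_val X G = Inf {U G 1 \<pi> | \<pi>. X G \<pi>}"

definition VoR_best :: "('a efg \<Rightarrow> 'a profile \<Rightarrow> bool) \<Rightarrow> 'a efg \<Rightarrow> real" where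
  "VoR_best X G = best_val X (pr1 G) / best_val X G"

definition VoR_worst :: "('a efg \<Rightarrow> 'a profile \<Rightarrow> bool) \<Rightarrow> 'a efg \<Rightarrow> real" where
  "VoR_worst X G = worst_val X (pr1 G) / worst_val X G"

end

theory Submission
  imports Defs
begin



definition NN :: "nat list set" where
 "NN = {[], [0], [1], [0,0], [1,0], [0,0,0], [1,0,0], [0,0,1], [1,0,1],
        [0,0,1,0], [0,0,1,1], [1,0,1,0], [1,0,1,1]}"

definition TT :: "nat list \<Rightarrow> nat" where
 "TT h = (if h = [] then 0 else if length h = 2 then 2 else 1)"

definition CC :: "nat list \<Rightarrow> nat \<Rightarrow> real" where
 "CC h a = (if a \<le> 1 then 1/2 else 0)"

definition UU :: "real \<Rightarrow> nat \<Rightarrow> nat list \<Rightarrow> real" where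
 "UU d i z = (if z = [0,0,0] \<or> z = [1,0,0] then d
    else if i = 1 then (if z = [0,0,1,0] then 2 else if z = [1,0,1,1] then 1 else 0)
    else (if z = [0,0,1,1] \<or> z = [1,0,1,0] then 1 else 0))"

abbreviation "X0 \<equiv> {[0::nat]}"
abbreviation "X1 \<equiv> {[1::nat]}"
abbreviation "PP \<equiv> {[0::nat,0],[1,0]}"
abbreviation "YY \<equiv> {[0::nat,0,1],[1,0,1]}"
abbreviation "Y0 \<equiv> {[0::nat,0,1]}"
abbreviation "Y1 \<equiv> {[1::nat,0,1]}"

definition IG :: "nat \<Rightarrow> nat list set set" where
 "IG i = (if i = 1 then {X0, X1, YY} else if i = 2 then {PP} else {})"
definition IP :: "nat \<Rightarrow> nat list set set" where
 "IP i = (if i = 1 then {X0, X1, Y0, Y1} else if i = 2 then {PP} else {})"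

definition GG :: "real \<Rightarrow> nat efg" where
 "GG d = \<lparr>nodes = NN, num_players = 2, turn = TT, chance = CC, util = UU d, infosets = IG\<rparr>"
definition GP :: "real \<Rightarrow> nat efg" where
 "GP d = \<lparr>nodes = NN, num_players = 2, turn = TT, chance = CC, util = UU d, infosets = IP\<rparr>"

lemma ne_sets[simp]: "X0 \<noteq> X1" "X0 \<noteq> YY" "X1 \<noteq> YY" "YY \<noteq> X0" "YY \<noteq> X1" "X1 \<noteq> X0"
  "X0 \<noteq> Y0" "X0 \<noteq> Y1" "X1 \<noteq> Y0" "X1 \<noteq> Y1" "Y0 \<noteq> Y1" "Y0 \<noteq> X0" "Y0 \<noteq> X1" "Y1 \<noteq> X0" "Y1 \<noteq> X1" "Y1 \<noteq> Y0"
  by (simp_all add: set_eq_iff; blast)+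

lemma reach4: "reach G \<pi> [a,b,c,e] = step_prob G \<pi> [] a * step_prob G \<pi> [a] b * step_prob G \<pi> [a,b] c * step_prob G \<pi> [a,b,c] e"
  by (simp add: reach_def lessThan_Suc eval_nat_numeral mult.commute mult.left_commute)
lemma reach3: "reach G \<pi> [a,b,c] = step_prob G \<pi> [] a * step_prob G \<pi> [a] b * step_prob G \<pi> [a,b] c"
  by (simp add: reach_def lessThan_Suc eval_nat_numeral mult.commute mult.left_commute)
lemma reach2: "reach G \<pi> [a,b] = step_prob G \<pi> [] a * step_prob G \<pi> [a] b"
  by (simp add: reach_def lessThan_Suc eval_nat_numeral mult.commute mult.left_commute)
lemma reach1: "reach G \<pi> [a] = step_prob G \<pi> [] a"
  by (simp add: reach_def)
lemma reach0: "reach G \<pi> [] = 1"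
  by (simp add: reach_def)

lemmas reachs = reach0 reach1 reach2 reach3 reach4

lemma sep_insert: "{x \<in> insert a A. P x} = (if P a then insert a {x \<in> A. P x} else {x \<in> A. P x})"
  by auto

context fixes G :: "nat efg" assumes nG: "nodes G = NN"
begin
lemma acts_NN: "acts G [] = {0,1}" "acts G [0] = {0}" "acts G [1] = {0}"
  "acts G [0,0] = {0,1}" "acts G [1,0] = {0,1}" "acts G [0,0,1] = {0,1}" "acts G [1,0,1] = {0,1}"
  "acts G [0,0,0] = {}" "acts G [1,0,0] = {}" "acts G [0,0,1,0] = {}" "acts G [0,0,1,1] = {}"
  "acts G [1,0,1,0] = {}" "acts G [1,0,1,1] = {}"
  unfolding acts_def nG NN_def by (simp_all add: set_eq_iff)

lemma leaves_NN: "leaves G = {[0,0,0], [1,0,0], [0,0,1,0], [0,0,1,1], [1,0,1,0], [1,0,1,1]}"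
  unfolding leaves_def nG NN_def by (simp only: sep_insert acts_NN) simp

lemma internal_NN: "internal_nodes G = {[], [0], [1], [0,0], [1,0], [0,0,1], [1,0,1]}"
  unfolding internal_nodes_def nG NN_def by (simp only: sep_insert acts_NN) simp
end

lemma GG_simps[simp]: "nodes (GG d) = NN" "turn (GG d) = TT" "chance (GG d) = CC" "util (GG d) = UU d"
  "infosets (GG d) = IG" "num_players (GG d) = 2" "players (GG d) = {1,2}"
  by (auto simp: GG_def players_def)
lemma GP_simps[simp]: "nodes (GP d) = NN" "turn (GP d) = TT" "chance (GP d) = CC" "util (GP d) = UU d"
  "infosets (GP d) = IP" "num_players (GP d) = 2" "players (GP d) = {1,2}"
  by (auto simp: GP_def players_def)

lemma NN_prefix: "h @ [a] \<in> NN \<Longrightarrow> h \<in> NN"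
  by (auto simp: NN_def append_eq_Cons_conv)

lemma TT_vals[simp]: "TT [] = 0" "TT [a] = 1" "TT [a,b] = 2" "TT [a,b,c] = 1"
  by (auto simp: TT_def)

lemma wf_GG: "d \<ge> 0 \<Longrightarrow> wf_efg (GG d)"
  unfolding wf_efg_def
  apply (simp only: internal_NN[OF GG_simps(1)] leaves_NN[OF GG_simps(1)] sep_insert)
  apply (simp add: acts_NN NN_prefix CC_def is_dist_def UU_def IG_def del: One_nat_def)
  apply (simp add: NN_def del: One_nat_def)
  apply (simp add: insert_commute)
  done

lemma wf_GP: "d \<ge> 0 \<Longrightarrow> wf_efg (GP d)"
  unfolding wf_efg_def
  apply (simp only: internal_NN[OF GP_simps(1)] leaves_NN[OF GP_simps(1)] sep_insert)
  apply (simp add: acts_NN NN_prefix CC_def is_dist_def UU_def IP_def del: One_nat_def)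
  apply (simp add: NN_def del: One_nat_def)
  apply (simp add: insert_commute)
  done


declare One_nat_def[simp del]

lemma infoset_ofI: "I \<in> infosets G i \<Longrightarrow> h \<in> I \<Longrightarrow> (\<And>J. J \<in> infosets G i \<Longrightarrow> h \<in> J \<Longrightarrow> J = I) \<Longrightarrow> infoset_of G i h = I"
  unfolding infoset_of_def by (rule the_equality) blast+

lemma inf_GG_0[simp]: "infoset_of (GG d) 1 [0] = X0"
  by (rule infoset_ofI) (auto simp: IG_def)

lemma inf_GG_1[simp]: "infoset_of (GG d) 1 [1] = X1"
  by (rule infoset_ofI) (auto simp: IG_def)

lemma inf_GG_2[simp]: "infoset_of (GG d) 1 [0,0,1] = YY"
  by (rule infoset_ofI) (auto simp: IG_def)

lemma inf_GG_3[simp]: "infoset_of (GG d) 1 [1,0,1] = YY"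
  by (rule infoset_ofI) (auto simp: IG_def)

lemma inf_GG_4[simp]: "infoset_of (GG d) 2 [0,0] = PP"
  by (rule infoset_ofI) (auto simp: IG_def)

lemma inf_GG_5[simp]: "infoset_of (GG d) 2 [1,0] = PP"
  by (rule infoset_ofI) (auto simp: IG_def)

lemma inf_GP_0[simp]: "infoset_of (GP d) 1 [0] = X0"
  by (rule infoset_ofI) (auto simp: IP_def)

lemma inf_GP_1[simp]: "infoset_of (GP d) 1 [1] = X1"
  by (rule infoset_ofI) (auto simp: IP_def)

lemma inf_GP_2[simp]: "infoset_of (GP d) 1 [0,0,1] = Y0"
  by (rule infoset_ofI) (auto simp: IP_def)

lemma inf_GP_3[simp]: "infoset_of (GP d) 1 [1,0,1] = Y1"
  by (rule infoset_ofI) (auto simp: IP_def)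

lemma inf_GP_4[simp]: "infoset_of (GP d) 2 [0,0] = PP"
  by (rule infoset_ofI) (auto simp: IP_def)

lemma inf_GP_5[simp]: "infoset_of (GP d) 2 [1,0] = PP"
  by (rule infoset_ofI) (auto simp: IP_def)



lemma U_GG: "U (GG d) i \<pi> = 1/2 * \<pi> 1 X0 0 * (\<pi> 2 PP 0 * d + \<pi> 2 PP 1 * (\<pi> 1 YY 0 * UU d i [0,0,1,0] + \<pi> 1 YY 1 * UU d i [0,0,1,1]))
   + 1/2 * \<pi> 1 X1 0 * (\<pi> 2 PP 0 * d + \<pi> 2 PP 1 * (\<pi> 1 YY 0 * UU d i [1,0,1,0] + \<pi> 1 YY 1 * UU d i [1,0,1,1]))"
  unfolding U_def leaves_NN[OF GG_simps(1)]
  apply (simp add: reachs step_prob_def CC_def)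
  apply (simp add: UU_def)
  apply (simp add: field_simps)
  done

lemma U_GP: "U (GP d) i \<pi> = 1/2 * \<pi> 1 X0 0 * (\<pi> 2 PP 0 * d + \<pi> 2 PP 1 * (\<pi> 1 Y0 0 * UU d i [0,0,1,0] + \<pi> 1 Y0 1 * UU d i [0,0,1,1]))
   + 1/2 * \<pi> 1 X1 0 * (\<pi> 2 PP 0 * d + \<pi> 2 PP 1 * (\<pi> 1 Y1 0 * UU d i [1,0,1,0] + \<pi> 1 Y1 1 * UU d i [1,0,1,1]))"
  unfolding U_def leaves_NN[OF GP_simps(1)]
  apply (simp add: reachs step_prob_def CC_def)
  apply (simp add: UU_def)
  apply (simp add: field_simps)
  done

lemma U1_GG: "U (GG d) 1 \<pi> = 1/2 * \<pi> 1 X0 0 * (\<pi> 2 PP 0 * d + \<pi> 2 PP 1 * (\<pi> 1 YY 0 * 2))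
   + 1/2 * \<pi> 1 X1 0 * (\<pi> 2 PP 0 * d + \<pi> 2 PP 1 * (\<pi> 1 YY 1))"
  by (simp add: U_GG UU_def)
lemma U2_GG: "U (GG d) 2 \<pi> = 1/2 * \<pi> 1 X0 0 * (\<pi> 2 PP 0 * d + \<pi> 2 PP 1 * (\<pi> 1 YY 1))
   + 1/2 * \<pi> 1 X1 0 * (\<pi> 2 PP 0 * d + \<pi> 2 PP 1 * (\<pi> 1 YY 0))"
  by (simp add: U_GG UU_def)
lemma U1_GP: "U (GP d) 1 \<pi> = 1/2 * \<pi> 1 X0 0 * (\<pi> 2 PP 0 * d + \<pi> 2 PP 1 * (\<pi> 1 Y0 0 * 2))
   + 1/2 * \<pi> 1 X1 0 * (\<pi> 2 PP 0 * d + \<pi> 2 PP 1 * (\<pi> 1 Y1 1))"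
  by (simp add: U_GP UU_def)
lemma U2_GP: "U (GP d) 2 \<pi> = 1/2 * \<pi> 1 X0 0 * (\<pi> 2 PP 0 * d + \<pi> 2 PP 1 * (\<pi> 1 Y0 1))
   + 1/2 * \<pi> 1 X1 0 * (\<pi> 2 PP 0 * d + \<pi> 2 PP 1 * (\<pi> 1 Y1 0))"
  by (simp add: U_GP UU_def)

lemma obs1_GG: "obs1 (GG d) [0] = []" "obs1 (GG d) [1] = []" "obs1 (GG d) [0,0,1] = [(X0,0)]" "obs1 (GG d) [1,0,1] = [(X1,0)]"
  by (simp_all add: obs1_def upt_rec)

lemma pr1_GG: "pr1 (GG d) = GP d"
proof -
  have 1: "(\<Union>I \<in> IG 1. {{h' \<in> I. obs1 (GG d) h' = obs1 (GG d) h} | h. h \<in> I}) = {X0, X1, Y0, Y1}"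
  proof -
    have e: "IG 1 = {X0,X1,YY}" by (simp add: IG_def)
    have s0: "{h' \<in> YY. obs1 (GG d) h' = obs1 (GG d) [0,0,1]} = Y0" by (auto simp: obs1_GG)
    have s1: "{h' \<in> YY. obs1 (GG d) h' = obs1 (GG d) [1,0,1]} = Y1" by (auto simp: obs1_GG)
    have fY: "{{h' \<in> YY. obs1 (GG d) h' = obs1 (GG d) h} | h. h \<in> YY} = {Y0, Y1}"
      unfolding setcompr_eq_image by (simp only: Collect_mem_eq image_insert image_empty s0 s1)
    have fX0: "{{h' \<in> X0. obs1 (GG d) h' = obs1 (GG d) h} | h. h \<in> X0} = {X0}" by auto
    have fX1: "{{h' \<in> X1. obs1 (GG d) h' = obs1 (GG d) h} | h. h \<in> X1} = {X1}" by auto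
    show ?thesis unfolding e
      apply (simp only: UN_insert UN_empty fX0 fX1 fY)
      apply auto
      done
  qed
  have 2: "IG(1 := (\<Union>I \<in> IG 1. {{h' \<in> I. obs1 (GG d) h' = obs1 (GG d) h} | h. h \<in> I})) = IP"
    unfolding 1 by (rule ext) (simp add: IP_def IG_def)
  show ?thesis unfolding pr1_def GG_simps(5) 2 by (simp add: GG_def GP_def)
qed

lemma actsI_const: "I \<noteq> {} \<Longrightarrow> (\<And>h. h \<in> I \<Longrightarrow> acts G h = A) \<Longrightarrow> actsI G I = A"
  unfolding actsI_def by (metis some_in_eq)

lemma actsI_GG: "actsI (GG d) X0 = {0}" "actsI (GG d) X1 = {0}" "actsI (GG d) YY = {0,1}" "actsI (GG d) PP = {0,1}"
  by (rule actsI_const; auto simp: acts_NN[OF GG_simps(1)])+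
lemma actsI_GP: "actsI (GP d) X0 = {0}" "actsI (GP d) X1 = {0}" "actsI (GP d) Y0 = {0,1}" "actsI (GP d) Y1 = {0,1}" "actsI (GP d) PP = {0,1}"
  by (rule actsI_const; auto simp: acts_NN[OF GP_simps(1)])+

lemma strat_GG1: "strat (GG d) 1 s \<longleftrightarrow> is_dist {0} (s X0) \<and> is_dist {0} (s X1) \<and> is_dist {0,1} (s YY)"
  by (simp add: strat_def IG_def actsI_GG)
lemma strat_GG2: "strat (GG d) 2 s \<longleftrightarrow> is_dist {0,1} (s PP)"
  by (simp add: strat_def IG_def actsI_GG)
lemma strat_GP1: "strat (GP d) 1 s \<longleftrightarrow> is_dist {0} (s X0) \<and> is_dist {0} (s X1) \<and> is_dist {0,1} (s Y0) \<and> is_dist {0,1} (s Y1)"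
  by (simp add: strat_def IP_def actsI_GP)
lemma strat_GP2: "strat (GP d) 2 s \<longleftrightarrow> is_dist {0,1} (s PP)"
  by (simp add: strat_def IP_def actsI_GP)

lemma dist1: "is_dist {0::nat} p \<Longrightarrow> p 0 = 1" by (simp add: is_dist_def)
lemma sum01: "sum p {0::nat,1} = p 0 + p 1" by simp
lemma dist2: "is_dist {0::nat,1} p \<Longrightarrow> p 0 + p 1 = 1 \<and> p 0 \<ge> 0 \<and> p 1 \<ge> 0" by (simp add: is_dist_def sum01)

lemma deriv_affine: assumes "\<And>t. f t = f 0 + B * t" shows "deriv f x = B"
proof -
  define c where "c = f 0"
  have e: "f = (\<lambda>t. c + B * t)" unfolding c_def by (rule ext) (rule assms)
  have "((\<lambda>t. c + B * t) has_field_derivative B) (at x)"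
    by (auto intro!: derivative_eq_intros)
  then show ?thesis unfolding e by (rule DERIV_imp_deriv)
qed

lemma dU_GG:
  "dU (GG d) 2 \<pi> PP 0 = 1/2 * \<pi> 1 X0 0 * d + 1/2 * \<pi> 1 X1 0 * d"
  "dU (GG d) 2 \<pi> PP 1 = 1/2 * \<pi> 1 X0 0 * \<pi> 1 YY 1 + 1/2 * \<pi> 1 X1 0 * \<pi> 1 YY 0"
  "dU (GG d) 1 \<pi> YY 0 = \<pi> 1 X0 0 * \<pi> 2 PP 1"
  "dU (GG d) 1 \<pi> YY 1 = 1/2 * \<pi> 1 X1 0 * \<pi> 2 PP 1"
  unfolding dU_def U1_GG U2_GG by (rule deriv_affine; simp add: algebra_simps)+

lemma dU_GP:
  "dU (GP d) 2 \<pi> PP 0 = 1/2 * \<pi> 1 X0 0 * d + 1/2 * \<pi> 1 X1 0 * d"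
  "dU (GP d) 2 \<pi> PP 1 = 1/2 * \<pi> 1 X0 0 * \<pi> 1 Y0 1 + 1/2 * \<pi> 1 X1 0 * \<pi> 1 Y1 0"
  "dU (GP d) 1 \<pi> Y0 0 = \<pi> 1 X0 0 * \<pi> 2 PP 1"
  "dU (GP d) 1 \<pi> Y0 1 = 0"
  "dU (GP d) 1 \<pi> Y1 0 = 0"
  "dU (GP d) 1 \<pi> Y1 1 = 1/2 * \<pi> 1 X1 0 * \<pi> 2 PP 1"
  unfolding dU_def U1_GP U2_GP by (rule deriv_affine; simp add: algebra_simps)+



lemma cdt_GG_vals:
  assumes c: "cdt_eq (GG d) \<pi>" and d: "0 < d" "d < 1/2"
  shows "\<pi> 1 X0 0 = 1 \<and> \<pi> 1 X1 0 = 1 \<and> \<pi> 2 PP 0 = 0 \<and> \<pi> 2 PP 1 = 1 \<and> \<pi> 1 YY 0 = 1 \<and> \<pi> 1 YY 1 = 0"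
proof -
  have p1: "strat (GG d) 1 (\<pi> 1)" and p2: "strat (GG d) 2 (\<pi> 2)"
    and k1: "kkt_point (GG d) 1 \<pi>" and k2: "kkt_point (GG d) 2 \<pi>"
    using c by (auto simp: cdt_eq_def profile_def)
  have x0: "\<pi> 1 X0 0 = 1" and x1: "\<pi> 1 X1 0 = 1" using p1 by (auto simp: strat_GG1 dist1)
  have oe: "\<pi> 2 PP 0 + \<pi> 2 PP 1 = 1" "\<pi> 2 PP 0 \<ge> 0" "\<pi> 2 PP 1 \<ge> 0" using p2 dist2 by (auto simp: strat_GG2)
  have yy: "\<pi> 1 YY 0 + \<pi> 1 YY 1 = 1" "\<pi> 1 YY 0 \<ge> 0" "\<pi> 1 YY 1 \<ge> 0" using p1 dist2 by (auto simp: strat_GG1)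
  obtain lam \<mu> where L: "\<forall>a \<in> {0,1}. \<mu> a \<ge> 0 \<and> \<mu> a * \<pi> 2 PP a = 0 \<and> dU (GG d) 2 \<pi> PP a = lam - \<mu> a"
    using k2 by (auto simp: kkt_point_def IG_def actsI_GG)
  then have L0: "\<mu> 0 \<ge> 0" "\<mu> 0 * \<pi> 2 PP 0 = 0" "d = lam - \<mu> 0"
    and L1: "\<mu> 1 \<ge> 0" "\<mu> 1 * \<pi> 2 PP 1 = 0" "1/2 = lam - \<mu> 1"
    using x0 x1 yy by (auto simp: dU_GG algebra_simps)
  have o: "\<pi> 2 PP 0 = 0"
  proof (rule ccontr)
    assume "\<pi> 2 PP 0 \<noteq> 0"
    then have "\<mu> 0 = 0" using L0 by simp
    then show False using L0 L1 d by linarith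
  qed
  have e: "\<pi> 2 PP 1 = 1" using o oe by simp
  obtain lam' \<mu>' where M: "\<forall>a \<in> {0,1}. \<mu>' a \<ge> 0 \<and> \<mu>' a * \<pi> 1 YY a = 0 \<and> dU (GG d) 1 \<pi> YY a = lam' - \<mu>' a"
    using k1 by (auto simp: kkt_point_def IG_def actsI_GG)
  then have M0: "\<mu>' 0 \<ge> 0" "1 = lam' - \<mu>' 0"
    and M1: "\<mu>' 1 \<ge> 0" "\<mu>' 1 * \<pi> 1 YY 1 = 0" "1/2 = lam' - \<mu>' 1"
    using x0 x1 e by (auto simp: dU_GG algebra_simps)
  have y1: "\<pi> 1 YY 1 = 0"
  proof (rule ccontr)
    assume "\<pi> 1 YY 1 \<noteq> 0"
    then have "\<mu>' 1 = 0" using M1 by simp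
    then show False using M0 M1 by linarith
  qed
  show ?thesis using x0 x1 o e y1 yy by simp
qed

lemma cdt_GP_vals:
  assumes c: "cdt_eq (GP d) \<pi>" and d: "0 < d" "d < 1/2"
  shows "\<pi> 1 X0 0 = 1 \<and> \<pi> 1 X1 0 = 1 \<and> \<pi> 2 PP 0 = 1 \<and> \<pi> 2 PP 1 = 0"
proof -
  have p1: "strat (GP d) 1 (\<pi> 1)" and p2: "strat (GP d) 2 (\<pi> 2)"
    and k1: "kkt_point (GP d) 1 \<pi>" and k2: "kkt_point (GP d) 2 \<pi>"
    using c by (auto simp: cdt_eq_def profile_def)
  have x0: "\<pi> 1 X0 0 = 1" and x1: "\<pi> 1 X1 0 = 1" using p1 by (auto simp: strat_GP1 dist1)
  have oe: "\<pi> 2 PP 0 + \<pi> 2 PP 1 = 1" "\<pi> 2 PP 0 \<ge> 0" "\<pi> 2 PP 1 \<ge> 0" using p2 dist2 by (auto simp: strat_GP2)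
  have y0: "\<pi> 1 Y0 0 + \<pi> 1 Y0 1 = 1" "\<pi> 1 Y0 0 \<ge> 0" "\<pi> 1 Y0 1 \<ge> 0" using p1 dist2 by (auto simp: strat_GP1)
  have y1: "\<pi> 1 Y1 0 + \<pi> 1 Y1 1 = 1" "\<pi> 1 Y1 0 \<ge> 0" "\<pi> 1 Y1 1 \<ge> 0" using p1 dist2 by (auto simp: strat_GP1)
  obtain lam \<mu> where L: "\<forall>a \<in> {0,1}. \<mu> a \<ge> 0 \<and> \<mu> a * \<pi> 2 PP a = 0 \<and> dU (GP d) 2 \<pi> PP a = lam - \<mu> a"
    using k2 by (auto simp: kkt_point_def IP_def actsI_GP)
  then have L0: "\<mu> 0 \<ge> 0" "d = lam - \<mu> 0"
    and L1: "\<mu> 1 \<ge> 0" "\<mu> 1 * \<pi> 2 PP 1 = 0" "1/2 * \<pi> 1 Y0 1 + 1/2 * \<pi> 1 Y1 0 = lam - \<mu> 1"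
    using x0 x1 by (auto simp: dU_GP algebra_simps)
  obtain lamA \<mu>A where A: "\<forall>a \<in> {0,1}. \<mu>A a \<ge> 0 \<and> \<mu>A a * \<pi> 1 Y0 a = 0 \<and> dU (GP d) 1 \<pi> Y0 a = lamA - \<mu>A a"
    using k1 by (auto simp: kkt_point_def IP_def actsI_GP)
  then have A0: "\<mu>A 0 \<ge> 0" "\<pi> 2 PP 1 = lamA - \<mu>A 0"
    and A1: "\<mu>A 1 \<ge> 0" "\<mu>A 1 * \<pi> 1 Y0 1 = 0" "0 = lamA - \<mu>A 1"
    using x0 x1 by (auto simp: dU_GP algebra_simps)
  obtain lamB \<mu>B where B: "\<forall>a \<in> {0,1}. \<mu>B a \<ge> 0 \<and> \<mu>B a * \<pi> 1 Y1 a = 0 \<and> dU (GP d) 1 \<pi> Y1 a = lamB - \<mu>B a"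
    using k1 by (auto simp: kkt_point_def IP_def actsI_GP)
  then have B0: "\<mu>B 0 \<ge> 0" "\<mu>B 0 * \<pi> 1 Y1 0 = 0" "0 = lamB - \<mu>B 0"
    and B1: "\<mu>B 1 \<ge> 0" "1/2 * \<pi> 2 PP 1 = lamB - \<mu>B 1"
    using x0 x1 by (auto simp: dU_GP algebra_simps)
  have e: "\<pi> 2 PP 1 = 0"
  proof (rule ccontr)
    assume ne: "\<pi> 2 PP 1 \<noteq> 0"
    then have epos: "\<pi> 2 PP 1 > 0" using oe by simp
    have "\<mu>A 1 > 0" using A0 A1 epos by linarith
    then have a: "\<pi> 1 Y0 1 = 0" using A1 by simp
    have "\<mu>B 0 > 0" using B0 B1 epos by linarith
    then have b: "\<pi> 1 Y1 0 = 0" using B0 by simp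
    have "\<mu> 1 = 0" using L1 ne by simp
    then show False using L0 L1 a b d by linarith
  qed
  show ?thesis using x0 x1 e oe by simp
qed



lemma nash_edt: "nash_eq G \<pi> \<Longrightarrow> edt_eq G \<pi>"
  unfolding nash_eq_def edt_eq_def
proof (intro conjI ballI allI impI; (elim conjE)?)
  fix i I d
  assume pr: "profile G \<pi>" and N: "\<forall>i\<in>players G. \<forall>s. strat G i s \<longrightarrow> U G i (\<pi>(i := s)) \<le> U G i \<pi>"
    and i: "i \<in> players G" and I: "I \<in> infosets G i" and dd: "is_dist (actsI G I) d"
  have "strat G i ((\<pi> i)(I := d))"
    using pr i dd unfolding profile_def strat_def by auto
  then show "U G i (\<pi>(i := (\<pi> i)(I := d))) \<le> U G i \<pi>" using N i by blast
qed simp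

lemma edt_GG_val:
  assumes c: "edt_eq (GG d) \<pi>" and d: "0 < d" "d < 1/2"
  shows "U (GG d) 1 \<pi> = 1"
proof -
  have p1: "strat (GG d) 1 (\<pi> 1)" and p2: "strat (GG d) 2 (\<pi> 2)"
    using c by (auto simp: edt_eq_def profile_def)
  have x0: "\<pi> 1 X0 0 = 1" and x1: "\<pi> 1 X1 0 = 1" using p1 by (auto simp: strat_GG1 dist1)
  have oe: "\<pi> 2 PP 0 + \<pi> 2 PP 1 = 1" "\<pi> 2 PP 0 \<ge> 0" "\<pi> 2 PP 1 \<ge> 0" using p2 dist2 by (auto simp: strat_GG2)
  have yy: "\<pi> 1 YY 0 + \<pi> 1 YY 1 = 1" "\<pi> 1 YY 0 \<ge> 0" "\<pi> 1 YY 1 \<ge> 0" using p1 dist2 by (auto simp: strat_GG1)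
  let ?dE = "\<lambda>a::nat. if a = 1 then 1 else (0::real)"
  let ?d0 = "\<lambda>a::nat. if a = 0 then 1 else (0::real)"
  have dE: "is_dist (actsI (GG d) PP) ?dE" by (simp add: actsI_GG is_dist_def sum01)
  have d0: "is_dist (actsI (GG d) YY) ?d0" by (simp add: actsI_GG is_dist_def sum01)
  have "U (GG d) 2 (\<pi>(2 := (\<pi> 2)(PP := ?dE))) \<le> U (GG d) 2 \<pi>"
    using c dE by (auto simp: edt_eq_def IG_def)
  then have pre: "1/2 * \<pi> 1 YY 1 + 1/2 * \<pi> 1 YY 0 \<le> \<pi> 2 PP 0 * d + \<pi> 2 PP 1 * (1/2 * \<pi> 1 YY 1 + 1/2 * \<pi> 1 YY 0)"
    unfolding U2_GG using x0 x1 by (simp add: algebra_simps)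
  have h: "1/2 * \<pi> 1 YY 1 + 1/2 * \<pi> 1 YY 0 = 1/2" using yy by simp
  have ineq: "1/2 \<le> \<pi> 2 PP 0 * d + \<pi> 2 PP 1 * (1/2)" using pre unfolding h .
  have eq: "\<pi> 2 PP 0 * (1/2 - d) = \<pi> 2 PP 0 / 2 - \<pi> 2 PP 0 * d" by (simp add: algebra_simps)
  have "\<pi> 2 PP 0 * (1/2 - d) \<le> 0" using ineq eq oe by linarith
  then have o: "\<pi> 2 PP 0 = 0" using oe d
    by (smt (verit) mult_pos_pos)
  have e: "\<pi> 2 PP 1 = 1" using o oe by simp
  have "U (GG d) 1 (\<pi>(1 := (\<pi> 1)(YY := ?d0))) \<le> U (GG d) 1 \<pi>"
    using c d0 by (auto simp: edt_eq_def IG_def)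
  then have "1 \<le> \<pi> 1 YY 0 + 1/2 * \<pi> 1 YY 1"
    unfolding U1_GG using x0 x1 o e by (simp add: algebra_simps)
  then have "\<pi> 1 YY 1 = 0" using yy by linarith
  then show ?thesis unfolding U1_GG using x0 x1 o e yy by simp
qed

lemma edt_GP_val:
  assumes c: "edt_eq (GP d) \<pi>" and d: "0 < d" "d < 1/2"
  shows "U (GP d) 1 \<pi> = d"
proof -
  have p1: "strat (GP d) 1 (\<pi> 1)" and p2: "strat (GP d) 2 (\<pi> 2)"
    using c by (auto simp: edt_eq_def profile_def)
  have x0: "\<pi> 1 X0 0 = 1" and x1: "\<pi> 1 X1 0 = 1" using p1 by (auto simp: strat_GP1 dist1)
  have oe: "\<pi> 2 PP 0 + \<pi> 2 PP 1 = 1" "\<pi> 2 PP 0 \<ge> 0" "\<pi> 2 PP 1 \<ge> 0" using p2 dist2 by (auto simp: strat_GP2)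
  have y0: "\<pi> 1 Y0 0 + \<pi> 1 Y0 1 = 1" "\<pi> 1 Y0 0 \<ge> 0" "\<pi> 1 Y0 1 \<ge> 0" using p1 dist2 by (auto simp: strat_GP1)
  have y1: "\<pi> 1 Y1 0 + \<pi> 1 Y1 1 = 1" "\<pi> 1 Y1 0 \<ge> 0" "\<pi> 1 Y1 1 \<ge> 0" using p1 dist2 by (auto simp: strat_GP1)
  let ?d1 = "\<lambda>a::nat. if a = 1 then 1 else (0::real)"
  let ?d0 = "\<lambda>a::nat. if a = 0 then 1 else (0::real)"
  have dO: "is_dist (actsI (GP d) PP) ?d0" by (simp add: actsI_GP is_dist_def sum01)
  have dA: "is_dist (actsI (GP d) Y0) ?d0" by (simp add: actsI_GP is_dist_def sum01)
  have dB: "is_dist (actsI (GP d) Y1) ?d1" by (simp add: actsI_GP is_dist_def sum01)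
  have "U (GP d) 2 (\<pi>(2 := (\<pi> 2)(PP := ?d0))) \<le> U (GP d) 2 \<pi>"
    using c dO by (auto simp: edt_eq_def IP_def)
  then have P: "d \<le> \<pi> 2 PP 0 * d + \<pi> 2 PP 1 * (1/2 * \<pi> 1 Y0 1 + 1/2 * \<pi> 1 Y1 0)"
    unfolding U2_GP using x0 x1 by (simp add: algebra_simps)
  have "U (GP d) 1 (\<pi>(1 := (\<pi> 1)(Y0 := ?d0))) \<le> U (GP d) 1 \<pi>"
    using c dA by (auto simp: edt_eq_def IP_def)
  then have A: "\<pi> 2 PP 1 * (1 - \<pi> 1 Y0 0) \<le> 0"
    unfolding U1_GP using x0 x1 by (simp add: algebra_simps)
  have "U (GP d) 1 (\<pi>(1 := (\<pi> 1)(Y1 := ?d1))) \<le> U (GP d) 1 \<pi>"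
    using c dB by (auto simp: edt_eq_def IP_def)
  then have B: "\<pi> 2 PP 1 * (1 - \<pi> 1 Y1 1) \<le> 0"
    unfolding U1_GP using x0 x1 by (simp add: algebra_simps)
  have e: "\<pi> 2 PP 1 = 0"
  proof (rule ccontr)
    assume "\<pi> 2 PP 1 \<noteq> 0"
    then have ep: "\<pi> 2 PP 1 > 0" using oe by simp
    have a: "\<pi> 1 Y0 0 = 1" using A ep y0 by (smt (verit) mult_pos_pos)
    have b: "\<pi> 1 Y1 1 = 1" using B ep y1 by (smt (verit) mult_pos_pos)
    have "d \<le> \<pi> 2 PP 0 * d" using P a b y0 y1 by simp
    then have "d * (1 - \<pi> 2 PP 0) \<le> 0" by (simp add: algebra_simps)
    then have "1 - \<pi> 2 PP 0 \<le> 0" using d by (smt (verit) mult_pos_pos)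
    then show False using oe ep by linarith
  qed
  then show ?thesis unfolding U1_GP using x0 x1 oe by (simp add: algebra_simps)
qed

definition \<pi>s :: "nat profile" where
  "\<pi>s i I a = (if i = 2 then (if a = 1 then 1 else 0) else (if a = 0 then 1 else 0))"
definition \<pi>o :: "nat profile" where
  "\<pi>o i I a = (if i = 2 then (if a = 0 then 1 else 0) else if I = Y1 then (if a = 1 then 1 else 0) else (if a = 0 then 1 else 0))"

lemma prof_\<pi>s: "profile (GG d) \<pi>s"
  by (simp add: profile_def strat_GG1 strat_GG2 \<pi>s_def is_dist_def sum01)
lemma prof_\<pi>o: "profile (GP d) \<pi>o"
  by (simp add: profile_def strat_GP1 strat_GP2 \<pi>o_def is_dist_def sum01)

lemma nash_\<pi>s: assumes d: "0 < d" "d < 1/2" shows "nash_eq (GG d) \<pi>s"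
  unfolding nash_eq_def
proof (intro conjI ballI allI impI)
  show "profile (GG d) \<pi>s" by (rule prof_\<pi>s)
  fix i s assume i: "i \<in> players (GG d)" and s: "strat (GG d) i s"
  show "U (GG d) i (\<pi>s(i := s)) \<le> U (GG d) i \<pi>s"
  proof (cases "i = 1")
    case True
    have "s X0 0 = 1" "s X1 0 = 1" "s YY 0 + s YY 1 = 1" "s YY 1 \<ge> 0"
      using s True dist1 dist2 by (auto simp: strat_GG1)
    then show ?thesis using True by (simp add: U1_GG \<pi>s_def)
  next
    case False
    then have i2: "i = 2" using i by simp
    have "s PP 0 + s PP 1 = 1" "s PP 0 \<ge> 0" "s PP 1 \<ge> 0"
      using s i2 dist2 by (auto simp: strat_GG2)
    moreover have "s PP 0 * d \<le> s PP 0 * (1/2)"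
      using calculation d by (intro mult_left_mono) auto
    moreover have "U (GG d) 2 (\<pi>s(2 := s)) = s PP 0 * d + s PP 1 / 2"
      by (simp add: U2_GG \<pi>s_def algebra_simps)
    moreover have "U (GG d) 2 \<pi>s = 1/2"
      by (simp add: U2_GG \<pi>s_def)
    ultimately show ?thesis using i2 by simp
  qed
qed

lemma nash_\<pi>o: assumes d: "0 < d" "d < 1/2" shows "nash_eq (GP d) \<pi>o"
  unfolding nash_eq_def
proof (intro conjI ballI allI impI)
  show "profile (GP d) \<pi>o" by (rule prof_\<pi>o)
  fix i s assume i: "i \<in> players (GP d)" and s: "strat (GP d) i s"
  show "U (GP d) i (\<pi>o(i := s)) \<le> U (GP d) i \<pi>o"
  proof (cases "i = 1")
    case True
    have "s X0 0 = 1" "s X1 0 = 1"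
      using s True dist1 by (auto simp: strat_GP1)
    then show ?thesis using True by (simp add: U1_GP \<pi>o_def)
  next
    case False
    then have i2: "i = 2" using i by simp
    have "s PP 0 + s PP 1 = 1" "s PP 0 \<ge> 0" "s PP 1 \<ge> 0"
      using s i2 dist2 by (auto simp: strat_GP2)
    moreover have "d * s PP 0 \<le> d * 1"
      using calculation d by (intro mult_left_mono) auto
    ultimately show ?thesis using i2 by (simp add: U2_GP \<pi>o_def)
  qed
qed

lemma kkt_single: "actsI G I = {0} \<Longrightarrow> \<exists>lam::real. \<exists>\<mu>::nat \<Rightarrow> real. \<forall>a \<in> actsI G I.
        \<mu> a \<ge> 0 \<and> \<mu> a * \<pi> i I a = 0 \<and> dU G i \<pi> I a = lam - \<mu> a"
  by (rule exI[of _ "dU G i \<pi> I 0"], rule exI[of _ "\<lambda>_. 0"]) simp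

lemma cdt_\<pi>s: assumes d: "0 < d" "d < 1/2" shows "cdt_eq (GG d) \<pi>s"
  unfolding cdt_eq_def
proof (intro conjI ballI)
  show "profile (GG d) \<pi>s" by (rule prof_\<pi>s)
  fix i assume i: "i \<in> players (GG d)"
  have s1: "strat (GG d) 1 (\<pi>s 1)" and s2: "strat (GG d) 2 (\<pi>s 2)"
    using prof_\<pi>s by (auto simp: profile_def)
  show "kkt_point (GG d) i \<pi>s"
  proof (cases "i = 1")
    case True
    have Y: "\<exists>lam::real. \<exists>\<mu>::nat \<Rightarrow> real. \<forall>a \<in> actsI (GG d) YY.
        \<mu> a \<ge> 0 \<and> \<mu> a * \<pi>s 1 YY a = 0 \<and> dU (GG d) 1 \<pi>s YY a = lam - \<mu> a"
      by (rule exI[of _ 1], rule exI[of _ "\<lambda>a. if a = 0 then 0 else 1/2"])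
         (simp add: actsI_GG dU_GG \<pi>s_def)
    show ?thesis using True s1 Y kkt_single[OF actsI_GG(1)] kkt_single[OF actsI_GG(2)]
      by (simp add: kkt_point_def IG_def)
  next
    case False
    then have i2: "i = 2" using i by simp
    have P: "\<exists>lam::real. \<exists>\<mu>::nat \<Rightarrow> real. \<forall>a \<in> actsI (GG d) PP.
        \<mu> a \<ge> 0 \<and> \<mu> a * \<pi>s 2 PP a = 0 \<and> dU (GG d) 2 \<pi>s PP a = lam - \<mu> a"
      by (rule exI[of _ "1/2"], rule exI[of _ "\<lambda>a. if a = 0 then 1/2 - d else 0"])
         (use d in \<open>simp add: actsI_GG dU_GG \<pi>s_def\<close>)
    show ?thesis using i2 s2 P by (simp add: kkt_point_def IG_def)
  qed
qed

lemma cdt_\<pi>o: assumes d: "0 < d" "d < 1/2" shows "cdt_eq (GP d) \<pi>o"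
  unfolding cdt_eq_def
proof (intro conjI ballI)
  show "profile (GP d) \<pi>o" by (rule prof_\<pi>o)
  fix i assume i: "i \<in> players (GP d)"
  have s1: "strat (GP d) 1 (\<pi>o 1)" and s2: "strat (GP d) 2 (\<pi>o 2)"
    using prof_\<pi>o by (auto simp: profile_def)
  show "kkt_point (GP d) i \<pi>o"
  proof (cases "i = 1")
    case True
    have A: "\<exists>lam::real. \<exists>\<mu>::nat \<Rightarrow> real. \<forall>a \<in> actsI (GP d) Y0.
        \<mu> a \<ge> 0 \<and> \<mu> a * \<pi>o 1 Y0 a = 0 \<and> dU (GP d) 1 \<pi>o Y0 a = lam - \<mu> a"
      by (rule exI[of _ 0], rule exI[of _ "\<lambda>a. 0"])
         (simp add: actsI_GP dU_GP \<pi>o_def)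
    have B: "\<exists>lam::real. \<exists>\<mu>::nat \<Rightarrow> real. \<forall>a \<in> actsI (GP d) Y1.
        \<mu> a \<ge> 0 \<and> \<mu> a * \<pi>o 1 Y1 a = 0 \<and> dU (GP d) 1 \<pi>o Y1 a = lam - \<mu> a"
      by (rule exI[of _ 0], rule exI[of _ "\<lambda>a. 0"])
         (simp add: actsI_GP dU_GP \<pi>o_def)
    show ?thesis using True s1 A B kkt_single[OF actsI_GP(1)] kkt_single[OF actsI_GP(2)]
      by (simp add: kkt_point_def IP_def)
  next
    case False
    then have i2: "i = 2" using i by simp
    have P: "\<exists>lam::real. \<exists>\<mu>::nat \<Rightarrow> real. \<forall>a \<in> actsI (GP d) PP.
        \<mu> a \<ge> 0 \<and> \<mu> a * \<pi>o 2 PP a = 0 \<and> dU (GP d) 2 \<pi>o PP a = lam - \<mu> a"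
      by (rule exI[of _ d], rule exI[of _ "\<lambda>a. if a = 0 then 0 else d"])
         (use d in \<open>simp add: actsI_GP dU_GP \<pi>o_def\<close>)
    show ?thesis using i2 s2 P by (simp add: kkt_point_def IP_def)
  qed
qed



lemma reach_GG_eq:
  assumes "\<pi> 1 X0 0 = \<pi>' 1 X0 0" "\<pi> 1 X1 0 = \<pi>' 1 X1 0" "\<pi> 2 PP 0 = \<pi>' 2 PP 0"
    "\<pi> 2 PP 1 = \<pi>' 2 PP 1" "\<pi> 1 YY 0 = \<pi>' 1 YY 0" "\<pi> 1 YY 1 = \<pi>' 1 YY 1"
  shows "real_equiv (GG d) \<pi> \<pi>'"
  unfolding real_equiv_def GG_simps NN_def using assms by (simp add: reachs step_prob_def)

lemma val_set: "(\<And>\<pi>. X \<pi> \<Longrightarrow> f \<pi> = (v::real)) \<Longrightarrow> X pz \<Longrightarrow> {f \<pi> | \<pi>. X \<pi>} = {v}"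
  by blast

lemma VoR_lemma:
  assumes "\<And>\<pi>. X (GG d) \<pi> \<Longrightarrow> U (GG d) 1 \<pi> = 1" "X (GG d) pa"
    "\<And>\<pi>. X (GP d) \<pi> \<Longrightarrow> U (GP d) 1 \<pi> = d" "X (GP d) pb" "d \<le> \<epsilon>"
  shows "VoR_worst X (GG d) \<le> \<epsilon> \<and> VoR_best X (GG d) \<le> \<epsilon>"
proof -
  have a: "{U (GG d) 1 \<pi> | \<pi>. X (GG d) \<pi>} = {1}" by (rule val_set[where pz=pa]) (use assms in auto)
  have b: "{U (GP d) 1 \<pi> | \<pi>. X (GP d) \<pi>} = {d}" by (rule val_set[where pz=pb]) (use assms in auto)
  show ?thesis unfolding VoR_worst_def VoR_best_def best_val_def worst_val_def pr1_GG a b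
    using assms(5) by simp
qed

theorem proposition2:
  fixes \<epsilon> :: real
  assumes "\<epsilon> > 0"
  shows "\<exists>G :: nat efg. wf_efg G \<and> num_players G = 2 \<and>
     (\<exists>\<pi>. cdt_eq G \<pi> \<and> (\<forall>\<pi>'. cdt_eq G \<pi>' \<longrightarrow> real_equiv G \<pi> \<pi>')) \<and>
     (\<forall>\<pi> \<pi>' i. cdt_eq G \<pi> \<longrightarrow> cdt_eq (pr1 G) \<pi>' \<longrightarrow> i \<in> {1, 2} \<longrightarrow>
        U G i \<pi> > 0 \<and> U (pr1 G) i \<pi>' / U G i \<pi> \<le> \<epsilon>) \<and>
     (\<forall>X \<in> {cdt_eq, edt_eq, nash_eq}. VoR_worst X G \<le> \<epsilon> \<and> VoR_best X G \<le> \<epsilon>)"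
proof -
  define d where "d = min \<epsilon> 1 / 4"
  have d: "0 < d" "d < 1/2" "d \<le> \<epsilon>/4" using assms by (auto simp: d_def)
  have cdtG: "U (GG d) 1 \<pi> = 1 \<and> U (GG d) 2 \<pi> = 1/2" if "cdt_eq (GG d) \<pi>" for \<pi>
    using cdt_GG_vals[OF that d(1,2)] by (simp add: U1_GG U2_GG)
  have cdtP: "U (GP d) 1 \<pi> = d \<and> U (GP d) 2 \<pi> = d" if "cdt_eq (GP d) \<pi>" for \<pi>
    using cdt_GP_vals[OF that d(1,2)] by (simp add: U1_GP U2_GP)
  have C1: "wf_efg (GG d)" using wf_GG d by simp
  have C3: "\<exists>\<pi>. cdt_eq (GG d) \<pi> \<and> (\<forall>\<pi>'. cdt_eq (GG d) \<pi>' \<longrightarrow> real_equiv (GG d) \<pi> \<pi>')"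
  proof (intro exI conjI allI impI)
    show "cdt_eq (GG d) \<pi>s" by (rule cdt_\<pi>s[OF d(1,2)])
    fix \<pi>' assume "cdt_eq (GG d) \<pi>'"
    from cdt_GG_vals[OF this d(1,2)] show "real_equiv (GG d) \<pi>s \<pi>'"
      by (intro reach_GG_eq) (simp_all add: \<pi>s_def)
  qed
  have C4: "\<forall>\<pi> \<pi>' i. cdt_eq (GG d) \<pi> \<longrightarrow> cdt_eq (pr1 (GG d)) \<pi>' \<longrightarrow> i \<in> {1, 2} \<longrightarrow>
        U (GG d) i \<pi> > 0 \<and> U (pr1 (GG d)) i \<pi>' / U (GG d) i \<pi> \<le> \<epsilon>"
  proof (intro allI impI)
    fix \<pi> \<pi>' i assume a: "cdt_eq (GG d) \<pi>" "cdt_eq (pr1 (GG d)) \<pi>'" "i \<in> {1,2::nat}"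
    have v: "U (GG d) 1 \<pi> = 1" "U (GG d) 2 \<pi> = 1/2" using cdtG[OF a(1)] by auto
    have w: "U (GP d) 1 \<pi>' = d" "U (GP d) 2 \<pi>' = d" using cdtP a(2) unfolding pr1_GG by auto
    show "U (GG d) i \<pi> > 0 \<and> U (pr1 (GG d)) i \<pi>' / U (GG d) i \<pi> \<le> \<epsilon>"
    proof -
      have "i = 1 \<or> i = 2" using a(3) by auto
      then show ?thesis
      proof
        assume "i = 1" then show ?thesis using d by (simp add: v w pr1_GG)
      next
        assume "i = 2" then show ?thesis using d by (simp add: v w pr1_GG)
      qed
    qed
  qed
  have C5: "\<forall>X \<in> {cdt_eq, edt_eq, nash_eq}. VoR_worst X (GG d) \<le> \<epsilon> \<and> VoR_best X (GG d) \<le> \<epsilon>"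
  proof -
    have de: "d \<le> \<epsilon>" using d by simp
    have "VoR_worst cdt_eq (GG d) \<le> \<epsilon> \<and> VoR_best cdt_eq (GG d) \<le> \<epsilon>"
      by (rule VoR_lemma[where X=cdt_eq, OF _ cdt_\<pi>s[OF d(1,2)] _ cdt_\<pi>o[OF d(1,2)] de]) (use cdtG cdtP in blast)+
    moreover have "VoR_worst edt_eq (GG d) \<le> \<epsilon> \<and> VoR_best edt_eq (GG d) \<le> \<epsilon>"
      by (rule VoR_lemma[where X=edt_eq, OF _ nash_edt[OF nash_\<pi>s[OF d(1,2)]] _ nash_edt[OF nash_\<pi>o[OF d(1,2)]] de])
        (use edt_GG_val edt_GP_val d in blast)+
    moreover have "VoR_worst nash_eq (GG d) \<le> \<epsilon> \<and> VoR_best nash_eq (GG d) \<le> \<epsilon>"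
      by (rule VoR_lemma[where X=nash_eq, OF _ nash_\<pi>s[OF d(1,2)] _ nash_\<pi>o[OF d(1,2)] de])
        (use edt_GG_val edt_GP_val nash_edt d in blast)+
    ultimately show ?thesis by simp
  qed
  show ?thesis
    by (rule exI[of _ "GG d"]) (use C1 C3 C4 C5 in simp)
qed

end
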